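(* Let $R$ be a constant such that for every closed orientable surface $S$ of genus at least 2 and all curves $\alpha,\beta$ in $S$, the Hausdorff distance in $\mathcal{C}(S)$ between $\Theta(\alpha,\beta)$ and any geodesic in $\mathcal{C}(S)$ joining $\alpha$ and $\beta$ is at most $R$. Let $S$ be a closed orientable surface of genus at least 2, let $\alpha,\beta$ be two curves in $S$, let $P(\alpha,\beta)$ be a path from $\alpha$ to $\beta$ in $\mathcal{C}(S)$ all of whose vertices lie in $\Theta(\alpha,\beta)$, and let $g$ be a geodesic in $\mathcal{C}(S)$ joining $\alpha$ and $\beta$. Then $g$ is contained in the closed $(2R+2)$-neighbourhood of $P(\alpha,\beta)$ in $\mathcal{C}(S)$.
   Context: Curves are essential simple closed curves in $S$. The curve graph $\mathcal{C}(S)$ has vertices the isotopy classes of curves, with edges between distinct classes having disjoint representatives; each edge has length 1. Given curves $\alpha,\beta$ in minimal position (transverse with the minimal number of intersection points in their isotopy classes, equivalently forming no bigon), a bicorn curve between $\alpha$ and $\beta$ is a curve formed as the union of one arc $a$ of $\alpha$ and one arc $b$ of $\beta$ such that $a$ and $b$ meet precisely at their endpoints. $\Theta(\alpha,\beta)$ is the set consisting of the isotopy classes of $\alpha$, of $\beta$, and of all bicorn curves between $\alpha$ and $\beta$ (with $\alpha,\beta$ isotoped into minimal position). *)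

theory Defs
  imports "HOL-Analysis.Analysis" "HOL-Homology.Homology"
    "HOL-Algebra.Free_Abelian_Groups" "HOL-Algebra.Elementary_Groups"
begin

definition circle :: "complex topology" where
  "circle = top_of_set (sphere 0 1)"

text \<open>Compact connected Hausdorff space locally homeomorphic to the plane (no boundary),
  orientable in the homological sense: H_2(X;Z) is infinite cyclic.\<close>
definition closed_orientable_surface :: "'a topology \<Rightarrow> bool" where
  "closed_orientable_surface X \<longleftrightarrow>
     topspace X \<noteq> {} \<and> compact_space X \<and> Hausdorff_space X \<and> connected_space X \<and>
     (\<forall>x\<in>topspace X. \<exists>U. openin X U \<and> x \<in> U \<and>
         subtopology X U homeomorphic_space (euclidean :: complex topology)) \<and>
     homology_group 2 X \<cong> integer_group"

definition surface_genus :: "'a topology \<Rightarrow> nat \<Rightarrow> bool" where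
  "surface_genus X g \<longleftrightarrow> homology_group 1 X \<cong> free_Abelian_group {..<2*g}"

definition simple_closed_curve :: "'a topology \<Rightarrow> 'a set \<Rightarrow> bool" where
  "simple_closed_curve X C \<longleftrightarrow> C \<subseteq> topspace X \<and> subtopology X C homeomorphic_space circle"

definition essential_curve :: "'a topology \<Rightarrow> 'a set \<Rightarrow> bool" where
  "essential_curve X C \<longleftrightarrow>
     (\<forall>\<gamma>. homeomorphic_map circle (subtopology X C) \<gamma> \<longrightarrow>
        \<not> (\<exists>c\<in>topspace X. homotopic_with (\<lambda>_. True) circle X \<gamma> (\<lambda>_. c)))"

definition curve :: "'a topology \<Rightarrow> 'a set \<Rightarrow> bool" where
  "curve X C \<longleftrightarrow> simple_closed_curve X C \<and> essential_curve X C"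

definition isotopic :: "'a topology \<Rightarrow> 'a set \<Rightarrow> 'a set \<Rightarrow> bool" where
  "isotopic X C D \<longleftrightarrow>
     (\<exists>H. continuous_map (prod_topology (top_of_set {0..1::real}) X) X H \<and>
          (\<forall>x\<in>topspace X. H (0, x) = x) \<and>
          (\<forall>t\<in>{0..1}. homeomorphic_map X X (\<lambda>x. H (t, x))) \<and>
          (\<lambda>x. H (1, x)) ` C = D)"

definition isotopy_class :: "'a topology \<Rightarrow> 'a set \<Rightarrow> 'a set set" where
  "isotopy_class X C = {D. curve X D \<and> isotopic X C D}"

definition cg_vertices :: "'a topology \<Rightarrow> 'a set set set" where
  "cg_vertices X = {isotopy_class X C | C. curve X C}"

definition cg_adj :: "'a topology \<Rightarrow> 'a set set \<Rightarrow> 'a set set \<Rightarrow> bool" where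
  "cg_adj X u v \<longleftrightarrow> u \<in> cg_vertices X \<and> v \<in> cg_vertices X \<and> u \<noteq> v \<and>
     (\<exists>C\<in>u. \<exists>D\<in>v. C \<inter> D = {})"

definition cg_walk :: "'a topology \<Rightarrow> 'a set set list \<Rightarrow> bool" where
  "cg_walk X p \<longleftrightarrow> p \<noteq> [] \<and> set p \<subseteq> cg_vertices X \<and>
     (\<forall>i. Suc i < length p \<longrightarrow> cg_adj X (p ! i) (p ! Suc i))"

definition cg_walk_from_to :: "'a topology \<Rightarrow> 'a set set list \<Rightarrow> 'a set set \<Rightarrow> 'a set set \<Rightarrow> bool" where
  "cg_walk_from_to X p u v \<longleftrightarrow> cg_walk X p \<and> hd p = u \<and> last p = v"

definition cg_dist_le :: "'a topology \<Rightarrow> 'a set set \<Rightarrow> 'a set set \<Rightarrow> real \<Rightarrow> bool" where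
  "cg_dist_le X u v r \<longleftrightarrow> (\<exists>p. cg_walk_from_to X p u v \<and> real (length p - 1) \<le> r)"

definition cg_geodesic :: "'a topology \<Rightarrow> 'a set set list \<Rightarrow> 'a set set \<Rightarrow> 'a set set \<Rightarrow> bool" where
  "cg_geodesic X p u v \<longleftrightarrow> cg_walk_from_to X p u v \<and>
     (\<forall>q. cg_walk_from_to X q u v \<longrightarrow> length p \<le> length q)"

definition cg_hausdorff_dist_le :: "'a topology \<Rightarrow> 'a set set set \<Rightarrow> 'a set set set \<Rightarrow> real \<Rightarrow> bool" where
  "cg_hausdorff_dist_le X A B r \<longleftrightarrow>
     (\<forall>a\<in>A. \<exists>b\<in>B. cg_dist_le X a b r) \<and> (\<forall>b\<in>B. \<exists>a\<in>A. cg_dist_le X b a r)"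

definition cg_closed_nbhd :: "'a topology \<Rightarrow> 'a set set set \<Rightarrow> real \<Rightarrow> 'a set set set" where
  "cg_closed_nbhd X A r = {v \<in> cg_vertices X. \<exists>a\<in>A. cg_dist_le X v a r}"

text \<open>Topological transversality: finitely many intersection points, at each of which the two
  curves look locally like the two coordinate axes of the plane.\<close>
definition transverse :: "'a topology \<Rightarrow> 'a set \<Rightarrow> 'a set \<Rightarrow> bool" where
  "transverse X A B \<longleftrightarrow> finite (A \<inter> B) \<and>
     (\<forall>x\<in>A \<inter> B. \<exists>U \<phi>. openin X U \<and> x \<in> U \<and>
        homeomorphic_map (subtopology X U) (euclidean :: complex topology) \<phi> \<and>
        \<phi> x = 0 \<and> \<phi> ` (A \<inter> U) = {z. Im z = 0} \<and> \<phi> ` (B \<inter> U) = {z. Re z = 0})"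

definition minimal_position :: "'a topology \<Rightarrow> 'a set \<Rightarrow> 'a set \<Rightarrow> bool" where
  "minimal_position X A B \<longleftrightarrow> transverse X A B \<and>
     (\<forall>A' B'. curve X A' \<and> curve X B' \<and> isotopic X A A' \<and> isotopic X B B' \<and>
        transverse X A' B' \<longrightarrow> card (A \<inter> B) \<le> card (A' \<inter> B'))"

definition arc_between :: "'a topology \<Rightarrow> 'a set \<Rightarrow> 'a \<Rightarrow> 'a \<Rightarrow> bool" where
  "arc_between X a p q \<longleftrightarrow> a \<subseteq> topspace X \<and>
     (\<exists>h. homeomorphic_map (top_of_set {0..1::real}) (subtopology X a) h \<and> h 0 = p \<and> h 1 = q)"

definition bicorn :: "'a topology \<Rightarrow> 'a set \<Rightarrow> 'a set \<Rightarrow> 'a set \<Rightarrow> bool" where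
  "bicorn X \<alpha> \<beta> c \<longleftrightarrow> curve X c \<and>
     (\<exists>a b p q. a \<subseteq> \<alpha> \<and> b \<subseteq> \<beta> \<and> arc_between X a p q \<and> arc_between X b p q \<and>
        a \<inter> b = {p, q} \<and> c = a \<union> b)"

text \<open>Theta(alpha, beta), for alpha, beta already in minimal position.\<close>
definition Theta :: "'a topology \<Rightarrow> 'a set \<Rightarrow> 'a set \<Rightarrow> 'a set set set" where
  "Theta X \<alpha> \<beta> = {isotopy_class X \<alpha>, isotopy_class X \<beta>} \<union>
     {isotopy_class X c | c. bicorn X \<alpha> \<beta> c}"

end

theory Submission
  imports Defs
begin

lemma walk_succ: "cg_walk X p \<longleftrightarrow> p \<noteq> [] \<and> set p \<subseteq> cg_vertices X \<and> successively (cg_adj X) p"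
  unfolding cg_walk_def successively_conv_nth by blast

lemma adj_sym: "cg_adj X u v \<Longrightarrow> cg_adj X v u"
  unfolding cg_adj_def by blast

lemma succ_take: "successively P xs \<Longrightarrow> successively P (take n xs)"
  unfolding successively_conv_nth by auto

lemma succ_drop: "successively P xs \<Longrightarrow> successively P (drop n xs)"
  unfolding successively_conv_nth by auto

lemma dist_nonneg: "cg_dist_le X u v r \<Longrightarrow> r \<ge> 0"
  unfolding cg_dist_le_def by (meson of_nat_0_le_iff order_trans)

lemma dist_sym: "cg_dist_le X u v r \<Longrightarrow> cg_dist_le X v u r"
proof -
  assume "cg_dist_le X u v r"
  then obtain p where p: "cg_walk_from_to X p u v" "real (length p - 1) \<le> r"
    unfolding cg_dist_le_def by blast
  have "successively (cg_adj X) (rev p)"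
    using p(1) unfolding cg_walk_from_to_def walk_succ successively_rev
    by (auto intro: successively_mono adj_sym)
  then have "cg_walk_from_to X (rev p) v u"
    using p(1) unfolding cg_walk_from_to_def walk_succ by (auto simp: hd_rev last_rev)
  then show ?thesis using p(2) unfolding cg_dist_le_def by (intro exI[of _ "rev p"]) auto
qed

lemma walk_append:
  assumes "cg_walk_from_to X p u v" "cg_walk_from_to X q v w"
  shows "cg_walk_from_to X (p @ tl q) u w \<and> length (p @ tl q) = length p + length q - 1"
proof -
  obtain q' where q: "q = v # q'" using assms(2) unfolding cg_walk_from_to_def cg_walk_def
    by (cases q) auto
  have sp: "successively (cg_adj X) p" and sq: "successively (cg_adj X) (v # q')"
    using assms q unfolding cg_walk_from_to_def walk_succ by auto
  have "successively (cg_adj X) (p @ q')"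
    using sp sq assms(1) unfolding successively_append_iff cg_walk_from_to_def
    by (auto simp: successively_Cons)
  moreover have "last (p @ q') = w" using assms q unfolding cg_walk_from_to_def by (cases "q' = []") simp_all
  moreover have "set (p @ q') \<subseteq> cg_vertices X" using assms q
    unfolding cg_walk_from_to_def cg_walk_def by auto
  moreover have "hd (p @ q') = u"
  proof -
    have "p \<noteq> []" "hd p = u" using assms(1) unfolding cg_walk_from_to_def cg_walk_def by auto
    then show ?thesis by simp
  qed
  moreover have "p \<noteq> []" using assms(1) unfolding cg_walk_from_to_def cg_walk_def by auto
  ultimately show ?thesis using q unfolding cg_walk_from_to_def walk_succ by auto
qed

lemma dist_trans: "cg_dist_le X u v r \<Longrightarrow> cg_dist_le X v w s \<Longrightarrow> cg_dist_le X u w (r + s)"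
proof -
  assume a: "cg_dist_le X u v r" "cg_dist_le X v w s"
  obtain p where p: "cg_walk_from_to X p u v" "real (length p - 1) \<le> r"
    using a(1) unfolding cg_dist_le_def by blast
  obtain q where q: "cg_walk_from_to X q v w" "real (length q - 1) \<le> s"
    using a(2) unfolding cg_dist_le_def by blast
  have np: "p \<noteq> []" "q \<noteq> []" using p q unfolding cg_walk_from_to_def cg_walk_def by auto
  from walk_append[OF p(1) q(1)] np p(2) q(2) show ?thesis
    unfolding cg_dist_le_def by (intro exI[of _ "p @ tl q"]) (auto simp: of_nat_diff)
qed

lemma dist_refl: "u \<in> cg_vertices X \<Longrightarrow> cg_dist_le X u u 0"
  unfolding cg_dist_le_def cg_walk_from_to_def cg_walk_def
  by (intro exI[of _ "[u]"]) auto

lemma dist_edge: "cg_adj X u v \<Longrightarrow> cg_dist_le X u v 1"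
  unfolding cg_dist_le_def cg_walk_from_to_def cg_walk_def
  by (intro exI[of _ "[u,v]"]) (auto simp: cg_adj_def less_Suc_eq)

lemma dist_mono: "cg_dist_le X u v r \<Longrightarrow> r \<le> s \<Longrightarrow> cg_dist_le X u v s"
  unfolding cg_dist_le_def by force

lemma sub_walk:
  assumes "cg_walk X g" "i \<le> j" "j < length g"
  shows "cg_dist_le X (g ! i) (g ! j) (real (j - i))"
proof -
  let ?q = "take (Suc (j - i)) (drop i g)"
  have len: "length ?q = Suc (j - i)" using assms by auto
  have "cg_walk X ?q"
    using assms unfolding cg_walk_def
    by (auto dest!: in_set_takeD in_set_dropD)
  moreover have "hd ?q = g ! i" using assms by (simp add: hd_take hd_drop_conv_nth)
  moreover have "last ?q = g ! j" using assms len
    by (simp add: last_conv_nth)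
  ultimately show ?thesis unfolding cg_dist_le_def cg_walk_from_to_def
    by (intro exI[of _ ?q]) (simp add: len)
qed

lemma geo_lower:
  assumes g: "cg_geodesic X g u w" and ij: "i \<le> j" "j < length g"
    and d: "cg_dist_le X (g ! i) (g ! j) r"
  shows "real (j - i) \<le> r"
proof -
  obtain q where q: "cg_walk_from_to X q (g!i) (g!j)" "real (length q - 1) \<le> r"
    using d unfolding cg_dist_le_def by blast
  have gw: "cg_walk X g" "hd g = u" "last g = w" and gmin: "\<And>q. cg_walk_from_to X q u w \<Longrightarrow> length g \<le> length q"
    using g unfolding cg_geodesic_def cg_walk_from_to_def by auto
  have qne: "q \<noteq> []" and qs: "successively (cg_adj X) q" and qset: "set q \<subseteq> cg_vertices X"
    and qh: "hd q = g ! i" and ql: "last q = g ! j"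
    using q unfolding cg_walk_from_to_def walk_succ by auto
  have gs: "successively (cg_adj X) g" and gset: "set g \<subseteq> cg_vertices X" and gne: "g \<noteq> []"
    using gw unfolding walk_succ by auto
  let ?s = "take i g @ q @ drop (Suc j) g"
  have A: "take i g = [] \<or> cg_adj X (last (take i g)) (hd q)"
  proof (cases i)
    case (Suc i')
    then have "last (take i g) = g ! i'" using ij by (simp add: take_Suc_conv_app_nth)
    then show ?thesis using successively_nth[OF gs, of i'] Suc ij qh by auto
  qed simp
  have B: "drop (Suc j) g = [] \<or> cg_adj X (last q) (hd (drop (Suc j) g))"
  proof (cases "Suc j < length g")
    case True
    then have "hd (drop (Suc j) g) = g ! Suc j" by (simp add: hd_drop_conv_nth)
    then show ?thesis using successively_nth[OF gs, of j] True ql by auto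
  qed simp
  have "successively (cg_adj X) ?s"
    using A B qne succ_take[OF gs] succ_drop[OF gs] qs
    unfolding successively_append_iff by auto
  moreover have "set ?s \<subseteq> cg_vertices X" using qset gset
    by (auto dest: in_set_takeD in_set_dropD)
  moreover have "hd ?s = u"
  proof (cases i)
    case 0 then show ?thesis using qne qh gw gne by (simp add: hd_conv_nth nth_append)
  next
    case (Suc i') then show ?thesis using ij gw gne by (simp add: hd_append hd_take)
  qed
  moreover have "last ?s = w"
  proof (cases "Suc j < length g")
    case True then show ?thesis using gw by simp
  next
    case False then have "j = length g - 1" using ij by simp
    moreover have "g ! (length g - 1) = w" using gw gne by (simp add: last_conv_nth)
    ultimately show ?thesis using False ql qne by simp
  qed
  ultimately have "cg_walk_from_to X ?s u w" using qne unfolding cg_walk_from_to_def walk_succ by simp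
  from gmin[OF this] have "length g \<le> length ?s" .
  then have "length g \<le> i + length q + (length g - Suc j)" using ij by simp
  then have "j - i \<le> length q - 1" using ij qne by (cases q) auto
  then show ?thesis using q(2) by (meson of_nat_le_iff order_trans)
qed

lemma discrete_step:
  fixes f :: "nat \<Rightarrow> nat"
  shows "f 0 \<le> k \<Longrightarrow> k \<le> f m \<Longrightarrow> 0 < m \<Longrightarrow> \<exists>i<m. f i \<le> k \<and> k \<le> f (Suc i)"
proof (induction m)
  case 0 then show ?case by simp
next
  case (Suc m)
  show ?case
  proof (cases "m > 0 \<and> k \<le> f m")
    case True
    then obtain i where "i < m" "f i \<le> k" "k \<le> f (Suc i)" using Suc by blast
    then show ?thesis by (intro exI[of _ i]) auto
  next
    case False
    then have "m = 0 \<or> f m < k" by auto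
    then show ?thesis
    proof
      assume "m = 0" then show ?thesis using Suc.prems by auto
    next
      assume "f m < k" then show ?thesis using Suc.prems by (intro exI[of _ m]) auto
    qed
  qed
qed

theorem lemma5:
  fixes R :: real and X :: "'a topology" and \<alpha> \<beta> :: "'a set"
    and P g :: "'a set set list"
  assumes hR: "\<forall>(Y::'a topology) \<alpha>' \<beta>' g'.
      closed_orientable_surface Y \<and> (\<exists>n\<ge>2. surface_genus Y n) \<and>
      curve Y \<alpha>' \<and> curve Y \<beta>' \<and> minimal_position Y \<alpha>' \<beta>' \<and>
      cg_geodesic Y g' (isotopy_class Y \<alpha>') (isotopy_class Y \<beta>')
      \<longrightarrow> cg_hausdorff_dist_le Y (Theta Y \<alpha>' \<beta>') (set g') R"
    and hS: "closed_orientable_surface X" and hgenus: "\<exists>n\<ge>2. surface_genus X n"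
    and h\<alpha>: "curve X \<alpha>" and h\<beta>: "curve X \<beta>"
    and hmin: "minimal_position X \<alpha> \<beta>"
    and hP: "cg_walk_from_to X P (isotopy_class X \<alpha>) (isotopy_class X \<beta>)"
    and hPTheta: "set P \<subseteq> Theta X \<alpha> \<beta>"
    and hg: "cg_geodesic X g (isotopy_class X \<alpha>) (isotopy_class X \<beta>)"
  shows "set g \<subseteq> cg_closed_nbhd X (set P) (2 * R + 2)"
proof
  have H: "cg_hausdorff_dist_le X (Theta X \<alpha> \<beta>) (set g) R"
    using hR hS hgenus h\<alpha> h\<beta> hmin hg by blast
  have H1: "\<And>a. a \<in> set P \<Longrightarrow> \<exists>b\<in>set g. cg_dist_le X a b R"
    using H hPTheta unfolding cg_hausdorff_dist_le_def by blast
  have Pw: "cg_walk X P" "hd P = isotopy_class X \<alpha>" "last P = isotopy_class X \<beta>"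
    using hP unfolding cg_walk_from_to_def by auto
  have gw: "cg_walk X g" "hd g = isotopy_class X \<alpha>" "last g = isotopy_class X \<beta>"
    using hg unfolding cg_geodesic_def cg_walk_from_to_def by auto
  have Pne: "P \<noteq> []" and gne: "g \<noteq> []" using Pw gw unfolding cg_walk_def by auto
  have lgP: "length g \<le> length P" using hg hP unfolding cg_geodesic_def by blast
  have R0: "R \<ge> 0" using H1[of "P!0"] Pne dist_nonneg by auto
  have Pv: "set P \<subseteq> cg_vertices X" and gv: "set g \<subseteq> cg_vertices X"
    using Pw gw unfolding cg_walk_def by auto
  have ex: "\<forall>i<length P. \<exists>j<length g. cg_dist_le X (P!i) (g!j) R \<and>
      (i = 0 \<longrightarrow> j = 0) \<and> (i = length P - 1 \<longrightarrow> j = length g - 1)"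
  proof (intro allI impI)
    fix i assume i: "i < length P"
    show "\<exists>j<length g. cg_dist_le X (P!i) (g!j) R \<and>
      (i = 0 \<longrightarrow> j = 0) \<and> (i = length P - 1 \<longrightarrow> j = length g - 1)"
    proof (cases "i = 0")
      case True
      have e: "P ! i = g ! 0" using True Pw gw Pne gne by (simp add: hd_conv_nth)
      have "g ! 0 \<in> cg_vertices X" using gv gne by auto
      then have d: "cg_dist_le X (P!i) (g!0) R" using e dist_refl dist_mono R0 by metis
      have "i = length P - 1 \<longrightarrow> 0 = length g - 1" using True lgP gne by auto
      then show ?thesis using d gne True by auto
    next
      case False
      show ?thesis
      proof (cases "i = length P - 1")
        case True
        have e: "P ! i = g ! (length g - 1)" using True Pw gw Pne gne by (simp add: last_conv_nth)
        have "g ! (length g - 1) \<in> cg_vertices X" using gv gne by auto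
        then have d: "cg_dist_le X (P!i) (g!(length g - 1)) R" using e dist_refl dist_mono R0 by metis
        then show ?thesis using gne False True by (intro exI[of _ "length g - 1"]) auto
      next
        case F2: False
        obtain b where "b \<in> set g" "cg_dist_le X (P!i) b R" using H1 i by force
        then obtain j where "j < length g" "cg_dist_le X (P!i) (g!j) R"
          by (auto simp: in_set_conv_nth)
        then show ?thesis using False F2 by blast
      qed
    qed
  qed
  then obtain f where f: "\<And>i. i < length P \<Longrightarrow> f i < length g \<and> cg_dist_le X (P!i) (g!(f i)) R \<and>
      (i = 0 \<longrightarrow> f i = 0) \<and> (i = length P - 1 \<longrightarrow> f i = length g - 1)"
    by metis
  fix v assume "v \<in> set g"
  then obtain k where k: "k < length g" "v = g ! k" by (auto simp: in_set_conv_nth)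
  have vV: "v \<in> cg_vertices X" using k gv by auto
  show "v \<in> cg_closed_nbhd X (set P) (2 * R + 2)"
  proof (cases "length P = 1")
    case True
    then have "f 0 = length g - 1" "f 0 = 0" using f[of 0] by auto
    then have "k = f 0" using k by auto
    then have "cg_dist_le X v (P!0) R" using f[of 0] Pne k dist_sym by auto
    then show ?thesis unfolding cg_closed_nbhd_def using vV Pne R0
      by (auto intro!: bexI[of _ "P!0"] elim: dist_mono)
  next
    case False
    then have m: "0 < length P - 1" using Pne by (cases P) auto
    have "f 0 \<le> k" using f[of 0] Pne by auto
    moreover have "k \<le> f (length P - 1)" using f[of "length P - 1"] Pne k by auto
    ultimately obtain i where i: "i < length P - 1" "f i \<le> k" "k \<le> f (Suc i)"
      using discrete_step[OF _ _ m] by blast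
    have fi: "f i < length g" "cg_dist_le X (P!i) (g!(f i)) R"
      and fs: "f (Suc i) < length g" "cg_dist_le X (P!Suc i) (g!(f (Suc i))) R"
      using f[of i] f[of "Suc i"] i by auto
    have adj: "cg_adj X (P!i) (P!Suc i)" using Pw i unfolding cg_walk_def by auto
    have "cg_dist_le X (g!(f i)) (g!(f (Suc i))) (R + 1 + R)"
      using dist_trans[OF dist_trans[OF dist_sym[OF fi(2)] dist_edge[OF adj]] fs(2)] .
    then have gap: "real (f (Suc i) - f i) \<le> 2*R + 1"
      using geo_lower[OF hg _ fs(1)] i by fastforce
    have "real (k - f i) + real (f (Suc i) - k) = real (f (Suc i) - f i)" using i by auto
    then have "real (k - f i) \<le> R + 1 \<or> real (f (Suc i) - k) \<le> R + 1" using gap by linarith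
    then show ?thesis
    proof
      assume a: "real (k - f i) \<le> R + 1"
      have "cg_dist_le X (g!k) (P!i) (real (k - f i) + R)"
        using dist_trans[OF dist_sym[OF sub_walk[OF gw(1) i(2) k(1)]] dist_sym[OF fi(2)]] .
      then have "cg_dist_le X v (P!i) (2*R+2)" using a R0 k by (auto elim: dist_mono)
      then show ?thesis unfolding cg_closed_nbhd_def using vV i by auto
    next
      assume a: "real (f (Suc i) - k) \<le> R + 1"
      have "cg_dist_le X (g!k) (P!Suc i) (real (f (Suc i) - k) + R)"
        using dist_trans[OF sub_walk[OF gw(1) i(3) fs(1)] dist_sym[OF fs(2)]] .
      then have "cg_dist_le X v (P!Suc i) (2*R+2)" using a R0 k by (auto elim: dist_mono)
      then show ?thesis unfolding cg_closed_nbhd_def using vV i by auto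
    qed
  qed
qed

end
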